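(* Fix an integer $m>1$ and consider the $(m,m)$ algorithm on the complete graph on $N$ nodes. Let $X(t)$ be the number of nodes in state $1$ at time $t$. Then for every $i\in\{0,1,\ldots,N\}$, $$\mathbb{P}(X(\infty)=N\mid X(0)=i)=\frac{\sum_{k=0}^{i-1}\binom{N-1}{k}^{m-1}}{\sum_{k=0}^{N-1}\binom{N-1}{k}^{m-1}}$$ (an empty sum being $0$). Further, for every $\alpha\in(0,1/2)$ there is a constant $c>0$ not depending on $N$ such that $$h_N(\alpha)\le c\exp\Bigl(-(N-1)(m-1)D\bigl(\alpha;\tfrac12\bigr)\Bigr),$$ where $D(p;\tfrac12)=\log 2-H(p)$ with $H(p)=-p\log p-(1-p)\log(1-p)$, i.e. $D(p;\tfrac12)$ is the Kullback–Leibler divergence of the Bernoulli$(p)$ distribution from the Bernoulli$(1/2)$ distribution. Moreover, the two sides of this inequality are logarithmically equivalent as $N\to\infty$, i.e. $\lim_{N\to\infty}\frac1N\log h_N(\alpha)=-(m-1)D(\alpha;\tfrac12)$.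
   Context: The $(m,d)$ algorithm (integers $1\le d\le m$) on the complete graph on $N$ nodes: each node has a state in $\{0,1\}$ and an independent unit-rate exponential clock (Poisson process of rate 1), independent of all states. At each tick of its clock, a node samples $m$ nodes uniformly at random from all $N$ nodes, with replacement, and observes their current states; if at least $d$ of the sampled nodes have a state different from its own, it switches its state, otherwise it keeps it. The number $X(t)$ of nodes in state 1 is then a continuous-time Markov chain on $\{0,\ldots,N\}$ with rates $q_{n,n+1}=(N-n)\mathbb{P}(\mathrm{Bin}(m,n/N)\ge d)$ and $q_{n,n-1}=n\,\mathbb{P}(\mathrm{Bin}(m,(N-n)/N)\ge d)$; states $0$ and $N$ are absorbing, and $X(\infty)$ denotes the absorbing state eventually reached. The $(m,m)$ algorithm is the case $d=m$. For $\alpha=i/N$, $i\in\{0,\ldots,N\}$, define $h_N(\alpha)=\mathbb{P}(X(\infty)=N\mid X(0)=\lfloor\alpha N\rfloor)$, and for general $\alpha\in[0,1]$ define $h_N(\alpha)=(N\alpha-\lfloor N\alpha\rfloor)h_N(\lceil\alpha N\rceil/N)+(\lceil N\alpha\rceil-N\alpha)h_N(\lfloor\alpha N\rfloor/N)$ (linear interpolation). *)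

theory Defs
  imports "HOL-Probability.Probability"
begin

definition binom_tail :: "nat \<Rightarrow> nat \<Rightarrow> real \<Rightarrow> real" where
  "binom_tail m d p = (\<Sum>j\<in>{d..m}. real (m choose j) * p ^ j * (1 - p) ^ (m - j))"

definition rate_up :: "nat \<Rightarrow> nat \<Rightarrow> nat \<Rightarrow> nat \<Rightarrow> real" where
  "rate_up m d N n = real (N - n) * binom_tail m d (real n / real N)"

definition rate_down :: "nat \<Rightarrow> nat \<Rightarrow> nat \<Rightarrow> nat \<Rightarrow> real" where
  "rate_down m d N n = real n * binom_tail m d (real (N - n) / real N)"

text \<open>One step of the embedded jump chain of the continuous-time chain X(t);
  states 0 and N (and any state with zero total rate) are absorbing.\<close>
definition jump_step :: "nat \<Rightarrow> nat \<Rightarrow> nat \<Rightarrow> nat \<Rightarrow> nat pmf" where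
  "jump_step m d N n =
     (if 0 < n \<and> n < N \<and> rate_up m d N n + rate_down m d N n > 0
      then map_pmf (\<lambda>b. if b then n + 1 else n - 1)
             (bernoulli_pmf (rate_up m d N n / (rate_up m d N n + rate_down m d N n)))
      else return_pmf n)"

fun jump_dist :: "nat \<Rightarrow> nat \<Rightarrow> nat \<Rightarrow> nat \<Rightarrow> nat \<Rightarrow> nat pmf" where
  "jump_dist m d N i 0 = return_pmf i"
| "jump_dist m d N i (Suc k) = bind_pmf (jump_dist m d N i k) (jump_step m d N)"

text \<open>P(X(\<infinity>) = N | X(0) = i): probability that the chain is eventually absorbed in N
  (the limit of the nondecreasing sequence P(Y_k = N)).\<close>
definition absorb_prob :: "nat \<Rightarrow> nat \<Rightarrow> nat \<Rightarrow> nat \<Rightarrow> real" where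
  "absorb_prob m d N i = lim (\<lambda>k. pmf (jump_dist m d N i k) N)"

definition hN :: "nat \<Rightarrow> nat \<Rightarrow> nat \<Rightarrow> real \<Rightarrow> real" where
  "hN m d N \<alpha> =
     (if real N * \<alpha> = of_int \<lfloor>real N * \<alpha>\<rfloor>
      then absorb_prob m d N (nat \<lfloor>real N * \<alpha>\<rfloor>)
      else (real N * \<alpha> - of_int \<lfloor>real N * \<alpha>\<rfloor>) * absorb_prob m d N (nat \<lceil>real N * \<alpha>\<rceil>)
         + (of_int \<lceil>real N * \<alpha>\<rceil> - real N * \<alpha>) * absorb_prob m d N (nat \<lfloor>real N * \<alpha>\<rfloor>))"

definition bin_entropy :: "real \<Rightarrow> real" where
  "bin_entropy p = - p * ln p - (1 - p) * ln (1 - p)"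

definition KL_half :: "real \<Rightarrow> real" where
  "KL_half p = ln 2 - bin_entropy p"

end

theory Submission
  imports Defs
begin

lemma binom_tail_mm: "binom_tail m m p = p ^ m"
  by (simp add: binom_tail_def)

lemma pmf_bind_fin:
  fixes M :: "nat pmf" and g :: "nat \<Rightarrow> nat pmf"
  assumes "set_pmf M \<subseteq> {..N}"
  shows "pmf (bind_pmf M g) x = (\<Sum>y\<le>N. pmf M y * pmf (g y) x)"
  unfolding pmf_bind
  apply (subst integral_measure_pmf_real[of "{..N}"])
  using assms by (auto simp: mult.commute)

lemma step_supp:
  assumes "n \<le> N" shows "set_pmf (jump_step m d N n) \<subseteq> {..N}"
  using assms by (auto simp: jump_step_def split: if_splits)

lemma dist_supp:
  assumes "i \<le> N" shows "set_pmf (jump_dist m d N i k) \<subseteq> {..N}"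
proof (induction k)
  case 0 then show ?case using assms by simp
next
  case (Suc k) then show ?case using step_supp[of _ N m d] by fastforce
qed

lemma E_step:
  fixes \<phi> :: "nat \<Rightarrow> real"
  assumes "i \<le> N"
  shows "(\<Sum>x\<le>N. pmf (jump_dist m d N i (Suc k)) x * \<phi> x)
       = (\<Sum>y\<le>N. pmf (jump_dist m d N i k) y * measure_pmf.expectation (jump_step m d N y) \<phi>)"
proof -
  have "(\<Sum>x\<le>N. pmf (jump_dist m d N i (Suc k)) x * \<phi> x)
      = (\<Sum>x\<le>N. (\<Sum>y\<le>N. pmf (jump_dist m d N i k) y * pmf (jump_step m d N y) x) * \<phi> x)"
    using pmf_bind_fin[OF dist_supp[OF assms], of m d k "jump_step m d N"] by simp
  also have "\<dots> = (\<Sum>y\<le>N. pmf (jump_dist m d N i k) y * (\<Sum>x\<le>N. \<phi> x * pmf (jump_step m d N y) x))"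
    unfolding sum_distrib_left sum_distrib_right
    by (subst sum.swap) (simp add: mult_ac)
  also have "\<dots> = (\<Sum>y\<le>N. pmf (jump_dist m d N i k) y * measure_pmf.expectation (jump_step m d N y) \<phi>)"
  proof (rule sum.cong[OF refl])
    fix y assume "y \<in> {..N}"
    then have "measure_pmf.expectation (jump_step m d N y) \<phi> = (\<Sum>x\<le>N. \<phi> x * pmf (jump_step m d N y) x)"
      using step_supp[of y N m d] by (subst integral_measure_pmf_real[of "{..N}"]) auto
    then show "pmf (jump_dist m d N i k) y * (\<Sum>x\<le>N. \<phi> x * pmf (jump_step m d N y) x) =
         pmf (jump_dist m d N i k) y * measure_pmf.expectation (jump_step m d N y) \<phi>" by simp
  qed
  finally show ?thesis .
qed

lemma E_step_interior:
  fixes \<phi> :: "nat \<Rightarrow> real"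
  assumes "0 < n" "n < N" "m > 0"
  defines "p \<equiv> rate_up m m N n / (rate_up m m N n + rate_down m m N n)"
  shows "measure_pmf.expectation (jump_step m m N n) \<phi> = \<phi> (n+1) * p + \<phi> (n - 1) * (1 - p)"
    and "0 < p" "p < 1"
proof -
  have u: "rate_up m m N n > 0" using assms by (simp add: rate_up_def binom_tail_mm)
  have dn: "rate_down m m N n > 0" using assms by (simp add: rate_down_def binom_tail_mm)
  show "0 < p" "p < 1" using u dn by (simp_all add: p_def field_simps)
  then show "measure_pmf.expectation (jump_step m m N n) \<phi> = \<phi> (n+1) * p + \<phi> (n - 1) * (1 - p)"
    using u dn assms(1,2) by (simp add: jump_step_def p_def[symmetric])
qed

lemma E_step_bdry:
  fixes \<phi> :: "nat \<Rightarrow> real"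
  assumes "\<not> (0 < n \<and> n < N)"
  shows "measure_pmf.expectation (jump_step m d N n) \<phi> = \<phi> n"
  using assms unfolding jump_step_def by auto

definition SS :: "nat \<Rightarrow> nat \<Rightarrow> nat \<Rightarrow> real" where
  "SS m N x = (\<Sum>k<x. real ((N - 1) choose k) ^ (m - 1))"

definition ff :: "nat \<Rightarrow> nat \<Rightarrow> nat \<Rightarrow> real" where
  "ff m N x = SS m N x / SS m N N"

lemma SS_Suc: "SS m N (Suc x) = SS m N x + real ((N - 1) choose x) ^ (m - 1)"
  by (simp add: SS_def)

lemma SS_pos: "N \<ge> 1 \<Longrightarrow> SS m N N > 0"
proof -
  assume "N \<ge> 1"
  then have "SS m N N = SS m N 1 + (\<Sum>k\<in>{1..<N}. real ((N - 1) choose k) ^ (m - 1))"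
    unfolding SS_def by (metis atLeast0LessThan sum.atLeastLessThan_concat zero_le_one)
  moreover have "SS m N 1 = 1" by (simp add: SS_def)
  moreover have "(\<Sum>k\<in>{1..<N}. real ((N - 1) choose k) ^ (m - 1)) \<ge> 0" by (auto intro: sum_nonneg)
  ultimately show ?thesis by linarith
qed

lemma SS_mono: "x \<le> y \<Longrightarrow> SS m N x \<le> SS m N y"
  unfolding SS_def by (rule sum_mono2) auto

lemma SS_nonneg: "SS m N x \<ge> 0"
  unfolding SS_def by (auto intro: sum_nonneg)

lemma SS_top: assumes "m > 1" "N \<le> x" "N \<ge> 1" shows "SS m N x = SS m N N"
proof -
  have "SS m N x = SS m N N + (\<Sum>k\<in>{N..<x}. real ((N - 1) choose k) ^ (m - 1))"
    unfolding SS_def using assms(2) by (metis atLeast0LessThan sum.atLeastLessThan_concat zero_le)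
  moreover have "(\<Sum>k\<in>{N..<x}. real ((N - 1) choose k) ^ (m - 1)) = 0"
    using assms(1,3) by (intro sum.neutral) auto
  ultimately show ?thesis by simp
qed

lemma ff_0: "ff m N 0 = 0" by (simp add: ff_def SS_def)
lemma ff_N: "N \<ge> 1 \<Longrightarrow> ff m N N = 1" using SS_pos[of N m] by (simp add: ff_def)
lemma ff_nonneg: "ff m N x \<ge> 0" by (simp add: ff_def SS_nonneg)
lemma ff_le1: "m > 1 \<Longrightarrow> N \<ge> 1 \<Longrightarrow> ff m N x \<le> 1"
  using SS_pos[of N m] SS_mono[of x N m] SS_top[of m N x]
  by (cases "x \<le> N") (auto simp: ff_def)

lemma choose_shift: assumes "0 < n" "n < N"
  shows "real n * real ((N - 1) choose n) = real (N - n) * real ((N - 1) choose (n - 1))"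
proof -
  obtain k where k: "n = Suc k" using assms by (cases n) auto
  have "Suc k * ((N - 1) choose Suc k) = (N - 1) * ((N - 1 - 1) choose k)" by (rule binomial_absorption)
  also have "\<dots> = (N - 1 - k) * ((N - 1) choose k)" by (rule binomial_absorb_comp[symmetric])
  finally have "n * ((N - 1) choose n) = (N - n) * ((N - 1) choose (n - 1))" using k by simp
  then show ?thesis by (metis of_nat_mult)
qed

lemma rate_identity: assumes "0 < n" "n < N" "m > 0"
  shows "rate_up m m N n * real ((N - 1) choose n) ^ (m - 1)
       = rate_down m m N n * real ((N - 1) choose (n - 1)) ^ (m - 1)"
proof -
  obtain j where j: "m = Suc j" using assms by (cases m) auto
  have nN: "real (N - n) = real N - real n" using assms by simp
  have "rate_up m m N n * real ((N - 1) choose n) ^ (m - 1)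
      = real (N - n) * real n * (real n * real ((N - 1) choose n)) ^ j / real N ^ m"
    by (simp add: rate_up_def binom_tail_mm j power_divide power_mult_distrib)
  also have "\<dots> = real (N - n) * real n * (real (N - n) * real ((N - 1) choose (n - 1))) ^ j / real N ^ m"
    using choose_shift[OF assms(1,2)] by simp
  also have "\<dots> = rate_down m m N n * real ((N - 1) choose (n - 1)) ^ (m - 1)"
    using assms by (simp add: rate_down_def binom_tail_mm j power_divide power_mult_distrib of_nat_diff)
  finally show ?thesis .
qed

lemma ff_harmonic: assumes "m > 1" "N \<ge> 1"
  shows "measure_pmf.expectation (jump_step m m N n) (ff m N) = ff m N n"
proof (cases "0 < n \<and> n < N")
  case False then show ?thesis by (rule E_step_bdry)
next
  case True
  let ?u = "rate_up m m N n" and ?d = "rate_down m m N n"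
  have u: "?u > 0" using True by (simp add: rate_up_def binom_tail_mm)
  have dn: "?d > 0" using True by (simp add: rate_down_def binom_tail_mm)
  obtain n' where n': "n = Suc n'" using True by (cases n) auto
  have S: "SS m N (n + 1) = SS m N n + real ((N - 1) choose n) ^ (m - 1)"
          "SS m N n = SS m N (n - 1) + real ((N - 1) choose (n - 1)) ^ (m - 1)"
    using n' by (simp_all add: SS_Suc)
  have R: "?u * real ((N - 1) choose n) ^ (m - 1) = ?d * real ((N - 1) choose (n - 1)) ^ (m - 1)"
    using rate_identity[of n N m] True assms by simp
  have "measure_pmf.expectation (jump_step m m N n) (ff m N)
      = ff m N (n+1) * (?u / (?u + ?d)) + ff m N (n - 1) * (1 - ?u / (?u + ?d))"
    using E_step_interior(1)[of n N m "ff m N"] True assms by simp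
  also have "\<dots> = (?u * SS m N (n+1) + ?d * SS m N (n - 1)) / ((?u + ?d) * SS m N N)"
  proof -
    have "1 - ?u / (?u + ?d) = ?d / (?u + ?d)" using u dn by (simp add: field_simps)
    then show ?thesis unfolding ff_def using u dn SS_pos[of N m] assms
      by (simp add: divide_simps)
  qed
  also have "?u * SS m N (n+1) + ?d * SS m N (n - 1) = (?u + ?d) * SS m N n"
    using S R by (simp add: algebra_simps)
  finally show ?thesis using u dn by (simp add: ff_def[of m N n])
qed

lemma ff_strict: assumes "m > 1" "N \<ge> 1" "0 < n" "n < N"
  shows "ff m N (n - 1) < ff m N (n + 1)"
proof -
  obtain n' where n': "n = Suc n'" using assms by (cases n) auto
  have "SS m N (n + 1) = SS m N (n - 1) + real ((N - 1) choose (n - 1)) ^ (m - 1) + real ((N - 1) choose n) ^ (m - 1)"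
    using n' by (simp add: SS_Suc)
  moreover have "real ((N - 1) choose n) > 0" using assms by simp
  ultimately have "SS m N (n - 1) < SS m N (n + 1)" by (smt (verit) zero_le_power zero_less_power of_nat_0_le_iff)
  then show ?thesis using SS_pos[of N m] assms by (simp add: ff_def divide_strict_right_mono)
qed

lemma var_id: "(a::real)^2 * p + b^2 * (1 - p) - (a * p + b * (1 - p))^2 = p * (1 - p) * (a - b)^2"
  by (simp add: power2_eq_square algebra_simps)

lemma ff_var: assumes "m > 1" "N \<ge> 1" "0 < n" "n < N"
  shows "measure_pmf.expectation (jump_step m m N n) (\<lambda>x. ff m N x ^ 2) - ff m N n ^ 2 > 0"
proof -
  let ?p = "rate_up m m N n / (rate_up m m N n + rate_down m m N n)"
  have p: "0 < ?p" "?p < 1" using E_step_interior(2,3)[of n N m] assms by auto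
  have h: "ff m N n = ff m N (n+1) * ?p + ff m N (n - 1) * (1 - ?p)"
    using ff_harmonic[OF assms(1,2), of n] E_step_interior(1)[of n N m "ff m N"] assms by simp
  have e: "measure_pmf.expectation (jump_step m m N n) (\<lambda>x. ff m N x ^ 2) = ff m N (n+1)^2 * ?p + ff m N (n - 1)^2 * (1 - ?p)"
    using E_step_interior(1)[of n N m "\<lambda>x. ff m N x ^ 2"] assms by simp
  have "ff m N (n+1)^2 * ?p + ff m N (n - 1)^2 * (1 - ?p) - (ff m N (n+1) * ?p + ff m N (n - 1) * (1 - ?p))^2
     = ?p * (1 - ?p) * (ff m N (n+1) - ff m N (n - 1))^2"
    by (rule var_id)
  moreover have "?p * (1 - ?p) * (ff m N (n+1) - ff m N (n - 1))^2 > 0"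
    using p ff_strict[OF assms] by (intro mult_pos_pos) auto
  ultimately show ?thesis using e h by simp
qed

lemma part1:
  assumes m: "m > 1" and N: "N \<ge> 1" and i: "i \<le> N"
  shows "absorb_prob m m N i = SS m N i / SS m N N"
proof -
  define P where "P k x = pmf (jump_dist m m N i k) x" for k x
  define A where "A k = (\<Sum>x\<in>{1..<N}. P k x)" for k
  define g where "g y = measure_pmf.expectation (jump_step m m N y) (\<lambda>x. ff m N x ^ 2) - ff m N y ^ 2" for y
  define \<epsilon> where "\<epsilon> = Min (insert 1 (g ` {1..<N}))"
  have eps_pos: "\<epsilon> > 0" unfolding \<epsilon>_def
    using ff_var[OF m N] by (subst Min_gr_iff) (auto simp: g_def)
  have eps_le: "\<epsilon> \<le> g y" if "y \<in> {1..<N}" for y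
    unfolding \<epsilon>_def using that by (intro Min_le) auto
  have g_ge: "g y \<ge> \<epsilon> * (if y \<in> {1..<N} then 1 else 0)" for y
  proof (cases "y \<in> {1..<N}")
    case True then show ?thesis using eps_le by simp
  next
    case False then have "\<not> (0 < y \<and> y < N)" by auto
    then have "g y = 0" by (simp add: g_def E_step_bdry)
    then show ?thesis using False by auto
  qed
  have sum1: "(\<Sum>x\<le>N. P k x) \<le> 1" for k
    unfolding P_def by (metis finite_atMost measure_measure_pmf_finite measure_pmf.prob_le_1)
  have mart: "(\<Sum>x\<le>N. P k x * ff m N x) = ff m N i" for k
  proof (induction k)
    case 0 then show ?case using i by (simp add: P_def indicator_def)
  next
    case (Suc k)
    have "(\<Sum>x\<le>N. P (Suc k) x * ff m N x) = (\<Sum>y\<le>N. P k y * measure_pmf.expectation (jump_step m m N y) (ff m N))"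
      unfolding P_def by (rule E_step[OF i])
    also have "\<dots> = (\<Sum>y\<le>N. P k y * ff m N y)" by (simp add: ff_harmonic[OF m N])
    finally show ?case using Suc by simp
  qed
  have sq: "(\<Sum>x\<le>N. P k x * ff m N x ^ 2) \<ge> ff m N i ^ 2 + \<epsilon> * (\<Sum>t<k. A t)" for k
  proof (induction k)
    case 0 then show ?case using i by (simp add: P_def indicator_def)
  next
    case (Suc k)
    have "(\<Sum>x\<le>N. P (Suc k) x * ff m N x ^ 2) = (\<Sum>y\<le>N. P k y * (ff m N y ^ 2 + g y))"
      unfolding P_def g_def by (subst E_step[OF i]) simp
    also have "\<dots> \<ge> (\<Sum>y\<le>N. P k y * (ff m N y ^ 2 + \<epsilon> * (if y \<in> {1..<N} then 1 else 0)))"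
      using g_ge by (intro sum_mono mult_left_mono) (auto simp: P_def)
    moreover have "(\<Sum>y\<le>N. P k y * (ff m N y ^ 2 + \<epsilon> * (if y \<in> {1..<N} then 1 else 0)))
        = (\<Sum>y\<le>N. P k y * ff m N y ^ 2) + \<epsilon> * A k"
    proof -
      have "(\<Sum>y\<le>N. P k y * (if y \<in> {1..<N} then 1 else 0)) = A k"
      proof -
        have "(\<Sum>y\<le>N. P k y * (if y \<in> {1..<N} then 1 else 0)) = (\<Sum>y\<le>N. if y \<in> {1..<N} then P k y else 0)"
          by (rule sum.cong) auto
        also have "\<dots> = sum (P k) ({..N} \<inter> {1..<N})" by (rule sum.inter_restrict[symmetric]) simp
        also have "{..N} \<inter> {1..<N} = {1..<N}" by auto
        finally show ?thesis unfolding A_def .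
      qed
      moreover have "(\<Sum>y\<le>N. P k y * (ff m N y ^ 2 + \<epsilon> * (if y \<in> {1..<N} then 1 else 0)))
        = (\<Sum>y\<le>N. P k y * ff m N y ^ 2) + \<epsilon> * (\<Sum>y\<le>N. P k y * (if y \<in> {1..<N} then 1 else 0))"
        by (simp add: algebra_simps sum.distrib sum_distrib_left)
      ultimately show ?thesis by simp
    qed
    ultimately show ?case using Suc by (simp add: distrib_left)
  qed
  have sqle: "(\<Sum>x\<le>N. P k x * ff m N x ^ 2) \<le> 1" for k
  proof -
    have "(\<Sum>x\<le>N. P k x * ff m N x ^ 2) \<le> (\<Sum>x\<le>N. P k x)"
      using ff_le1[OF m N] ff_nonneg
      by (intro sum_mono) (auto simp: P_def intro!: mult_right_le_one_le power_le_one)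
    then show ?thesis using sum1[of k] by simp
  qed
  have A_nonneg: "A k \<ge> 0" for k unfolding A_def P_def by (auto intro: sum_nonneg)
  have "summable A"
  proof (rule summableI_nonneg_bounded[OF A_nonneg])
    fix k
    have "\<epsilon> * (\<Sum>t<k. A t) \<le> 1" using sq[of k] sqle[of k]
      by (smt (verit) zero_le_power2)
    then show "(\<Sum>t<k. A t) \<le> 1 / \<epsilon>" using eps_pos by (simp add: field_simps)
  qed
  then have A0: "A \<longlonglongrightarrow> 0" by (rule summable_LIMSEQ_zero)
  have dec: "ff m N i = P k N + (\<Sum>x\<in>{1..<N}. P k x * ff m N x)" for k
  proof -
    have "{..N} = insert 0 (insert N {1..<N})" using N by auto
    then have "(\<Sum>x\<le>N. P k x * ff m N x) = P k 0 * ff m N 0 + (P k N * ff m N N + (\<Sum>x\<in>{1..<N}. P k x * ff m N x))"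
      using N by simp
    then show ?thesis using mart[of k] ff_0 ff_N[OF N] by simp
  qed
  have bnd: "ff m N i - A k \<le> P k N \<and> P k N \<le> ff m N i" for k
  proof -
    have "(\<Sum>x\<in>{1..<N}. P k x * ff m N x) \<le> A k"
      unfolding A_def using ff_le1[OF m N] by (intro sum_mono) (auto simp: P_def intro: mult_right_le_one_le ff_nonneg)
    moreover have "(\<Sum>x\<in>{1..<N}. P k x * ff m N x) \<ge> 0"
      by (auto simp: P_def intro!: sum_nonneg mult_nonneg_nonneg ff_nonneg)
    ultimately show ?thesis using dec[of k] by linarith
  qed
  have "(\<lambda>k. P k N) \<longlonglongrightarrow> ff m N i"
  proof (rule tendsto_sandwich[of "\<lambda>k. ff m N i - A k" _ _ "\<lambda>k. ff m N i"])
    show "\<forall>\<^sub>F k in sequentially. ff m N i - A k \<le> P k N" using bnd by simp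
    show "\<forall>\<^sub>F k in sequentially. P k N \<le> ff m N i" using bnd by simp
    show "(\<lambda>k. ff m N i - A k) \<longlonglongrightarrow> ff m N i" using tendsto_diff[OF tendsto_const A0] by simp
  qed simp
  then show ?thesis unfolding absorb_prob_def P_def ff_def by (rule limI)
qed

lemma KL_alt: "KL_half p = ln 2 + p * ln p + (1 - p) * ln (1 - p)"
  by (simp add: KL_half_def bin_entropy_def algebra_simps)

lemma KL_convex:
  assumes "0 < p" "p < 1" "0 < a" "a < 1"
  shows "KL_half p \<ge> KL_half a + ln (a / (1 - a)) * (p - a)"
proof -
  have 1: "p * (ln a - ln p) \<le> a - p"
    using ln_diff_le[of a p] assms by (simp add: field_simps)
  have 2: "(1 - p) * (ln (1 - a) - ln (1 - p)) \<le> (1 - a) - (1 - p)"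
    using ln_diff_le[of "1 - a" "1 - p"] assms by (simp add: field_simps)
  have "KL_half p - KL_half a - ln (a / (1 - a)) * (p - a)
      = p * (ln p - ln a) + (1 - p) * (ln (1 - p) - ln (1 - a))"
    using assms by (simp add: KL_alt ln_div algebra_simps)
  also have "\<dots> \<ge> 0" using 1 2 by (simp add: algebra_simps)
  finally show ?thesis by simp
qed

lemma KL_nonneg: assumes "0 < p" "p < 1" shows "KL_half p \<ge> 0"
proof -
  have "KL_half (1/2) = 0" by (simp add: KL_alt ln_div)
  then show ?thesis using KL_convex[OF assms, of "1/2"] by simp
qed

lemma KL_half_le: assumes "0 < q" "q < 1" shows "KL_half q \<le> (2*q - 1)^2"
proof -
  have "KL_half q = q * ln (2*q) + (1 - q) * ln (2*(1-q))"
  proof -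
    have "ln (2*(1-q)) = ln 2 + ln (1 - q)" "ln (2*q) = ln 2 + ln q" using assms ln_mult[of 2 "1-q"] ln_mult[of 2 q] by simp_all
    then show ?thesis by (simp add: KL_alt algebra_simps)
  qed
  also have "\<dots> \<le> q * (2*q - 1) + (1 - q) * (2*(1-q) - 1)"
    using assms ln_le_minus_one[of "2*q"] ln_le_minus_one[of "2*(1-q)"]
    by (intro add_mono mult_left_mono) auto
  also have "\<dots> = (2*q - 1)^2" by (simp add: power2_eq_square algebra_simps)
  finally show ?thesis .
qed

definition FF :: "real \<Rightarrow> real \<Rightarrow> real" where
  "FF N x = x * ln x + (N - x) * ln (N - x)"

lemma FF_KL: assumes "0 < x" "x < N"
  shows "FF N x = N * ln N - N * ln 2 + N * KL_half (x / N)"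
proof -
  have N: "N > 0" using assms by simp
  have "1 - x / N = (N - x) / N" using N by (simp add: field_simps)
  then have "N * KL_half (x / N) = N * ln 2 + x * (ln x - ln N) + (N - x) * (ln (N - x) - ln N)"
    using assms N by (simp add: KL_alt ln_div field_simps)
  then show ?thesis by (simp add: FF_def algebra_simps)
qed

lemma FF_step_up: assumes "1 \<le> j" "j + 1 < N"
  shows "ln (j / (N - j)) \<le> FF N (j + 1) - FF N j"
proof -
  have a: "(j + 1) * (ln j - ln (j+1)) \<le> -1"
    using ln_diff_le[of j "j+1"] assms by (simp add: field_simps)
  have b: "(N - j - 1) * (ln (N - j) - ln (N - j - 1)) \<le> 1"
    using ln_diff_le[of "N - j" "N - j - 1"] assms by (simp add: field_simps)
  have "FF N (j + 1) - FF N j - ln (j / (N - j)) = - ((j + 1) * (ln j - ln (j+1))) - (N - j - 1) * (ln (N - j) - ln (N - j - 1))"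
    using assms by (simp add: FF_def ln_div algebra_simps)
  then show ?thesis using a b by linarith
qed

lemma FF_step_down: assumes "2 \<le> j" "j < N"
  shows "FF N j - FF N (j - 1) \<le> ln (j / (N - j))"
proof -
  have a: "(j - 1) * (ln j - ln (j - 1)) \<le> 1"
    using ln_diff_le[of j "j - 1"] assms by (simp add: field_simps)
  have b: "(N - j + 1) * (ln (N - j) - ln (N - j + 1)) \<le> -1"
    using ln_diff_le[of "N - j" "N - j + 1"] assms by (simp add: field_simps)
  have "FF N j - FF N (j - 1) - ln (j / (N - j)) = (j - 1) * (ln j - ln (j - 1)) + (N - j + 1) * (ln (N - j) - ln (N - j + 1))"
    using assms by (simp add: FF_def ln_div algebra_simps)
  then show ?thesis using a b by linarith
qed

abbreviation bb :: "nat \<Rightarrow> nat \<Rightarrow> real" where "bb N k \<equiv> real ((N - 1) choose k)"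

lemma bb_pos: "k < N \<Longrightarrow> bb N k > 0" by simp

lemma bb_ratio: assumes "1 \<le> j" "j < N"
  shows "ln (bb N (j - 1)) - ln (bb N j) = ln (real j / (real N - real j))"
proof -
  have "real j * bb N j = real (N - j) * bb N (j - 1)" using choose_shift[of j N] assms by simp
  then have "bb N (j - 1) / bb N j = real j / (real N - real j)"
    using assms bb_pos[of j N] by (simp add: field_simps of_nat_diff)
  moreover have "ln (bb N (j - 1) / bb N j) = ln (bb N (j - 1)) - ln (bb N j)"
    using assms bb_pos[of j N] bb_pos[of "j-1" N] by (simp add: ln_div)
  ultimately show ?thesis by simp
qed

lemma tele_up: assumes "K \<le> M" "M + 1 < N"
  shows "ln (bb N K) - ln (bb N M) \<le> FF N (real M + 1) - FF N (real K + 1)"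
proof -
  have "\<forall>M'. M' = M \<longrightarrow> M' + 1 < N \<longrightarrow> ln (bb N K) - ln (bb N M') \<le> FF N (real M' + 1) - FF N (real K + 1)"
    using assms(1)
  proof (induction M rule: dec_induct)
    case base then show ?case by simp
  next
    case (step n)
    show ?case
    proof (intro allI impI)
      fix M' assume M': "M' = Suc n" "M' + 1 < N"
      have IH: "ln (bb N K) - ln (bb N n) \<le> FF N (real n + 1) - FF N (real K + 1)"
        using step.IH M' by simp
      have r: "ln (bb N n) - ln (bb N (Suc n)) = ln (real (Suc n) / (real N - real (Suc n)))"
        using bb_ratio[of "Suc n" N] M' by simp
      have s: "ln (real (Suc n) / (real N - real (Suc n))) \<le> FF N (real (Suc n) + 1) - FF N (real (Suc n))"
        using FF_step_up[of "real (Suc n)" "real N"] M' by simp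
      show "ln (bb N K) - ln (bb N M') \<le> FF N (real M' + 1) - FF N (real K + 1)"
        using IH r s M' by (simp add: add.commute)
    qed
  qed
  then show ?thesis using assms by blast
qed

lemma tele_down: assumes "1 \<le> K" "K \<le> M" "M < N"
  shows "FF N (real M) - FF N (real K) \<le> ln (bb N K) - ln (bb N M)"
proof -
  have "\<forall>M'. M' = M \<longrightarrow> M' < N \<longrightarrow> FF N (real M') - FF N (real K) \<le> ln (bb N K) - ln (bb N M')"
    using assms(2)
  proof (induction M rule: dec_induct)
    case base then show ?case by simp
  next
    case (step n)
    show ?case
    proof (intro allI impI)
      fix M' assume M': "M' = Suc n" "M' < N"
      have IH: "FF N (real n) - FF N (real K) \<le> ln (bb N K) - ln (bb N n)"
        using step.IH M' by simp
      have r: "ln (bb N n) - ln (bb N (Suc n)) = ln (real (Suc n) / (real N - real (Suc n)))"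
        using bb_ratio[of "Suc n" N] M' by simp
      have s: "FF N (real (Suc n)) - FF N (real (Suc n) - 1) \<le> ln (real (Suc n) / (real N - real (Suc n)))"
        using FF_step_down[of "real (Suc n)" "real N"] M' step.hyps assms(1) by simp
      show "FF N (real M') - FF N (real K) \<le> ln (bb N K) - ln (bb N M')"
        using IH r s M' by simp
    qed
  qed
  then show ?thesis using assms by blast
qed

lemma SS_geom: assumes m: "m > 1" and r: "0 \<le> r" "r < 1"
    and h: "\<And>k. 1 \<le> k \<Longrightarrow> k \<le> K \<Longrightarrow> bb N (k - 1) \<le> r * bb N k"
  shows "SS m N (K + 1) \<le> bb N K ^ (m - 1) / (1 - r)"
  using h
proof (induction K)
  case 0
  have "1 \<le> 1 / (1 - r)" using r by (simp add: field_simps)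
  then have "bb N 0 ^ (m - 1) \<le> bb N 0 ^ (m - 1) / (1 - r)" by simp
  then show ?case by (simp add: SS_def)
next
  case (Suc K)
  let ?B = "bb N (Suc K) ^ (m - 1)"
  have IH: "SS m N (K + 1) \<le> bb N K ^ (m - 1) / (1 - r)" using Suc by simp
  have "bb N K \<le> r * bb N (Suc K)" using Suc.prems[of "Suc K"] by simp
  then have "bb N K ^ (m - 1) \<le> (r * bb N (Suc K)) ^ (m - 1)" by (intro power_mono) auto
  also have "\<dots> = r ^ (m - 1) * ?B" by (simp add: power_mult_distrib)
  also have "\<dots> \<le> r * ?B"
    using power_decreasing[of 1 "m - 1" r] m r by (intro mult_right_mono) auto
  finally have "bb N K ^ (m - 1) \<le> r * ?B" .
  then have "bb N K ^ (m - 1) / (1 - r) \<le> r * ?B / (1 - r)"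
    using r by (intro divide_right_mono) auto
  moreover have "SS m N (Suc K + 1) = SS m N (K + 1) + ?B" by (simp add: SS_Suc)
  ultimately have "SS m N (Suc K + 1) \<le> r * ?B / (1 - r) + ?B"
    using IH by linarith
  also have "\<dots> = ?B / (1 - r)" using r by (simp add: field_simps)
  finally show ?case .
qed

lemma hN_between:
  assumes m: "m > 1" and N: "N \<ge> 1" and a: "0 < \<alpha>" "\<alpha> < 1/2"
  shows "ff m N (nat \<lfloor>real N * \<alpha>\<rfloor>) \<le> hN m m N \<alpha> \<and> hN m m N \<alpha> \<le> ff m N (nat \<lceil>real N * \<alpha>\<rceil>)"
proof -
  let ?x = "real N * \<alpha>"
  have xN: "?x < real N" using a N by simp
  have x0: "?x > 0" using a N by simp
  have cN: "nat \<lceil>?x\<rceil> \<le> N" using xN by linarith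
  have fN: "nat \<lfloor>?x\<rfloor> \<le> N" using xN by linarith
  have fc: "nat \<lfloor>?x\<rfloor> \<le> nat \<lceil>?x\<rceil>" by (simp add: nat_mono floor_le_ceiling)
  have ab: "absorb_prob m m N i = ff m N i" if "i \<le> N" for i
    using part1[OF m N that] by (simp add: ff_def)
  have mono: "ff m N (nat \<lfloor>?x\<rfloor>) \<le> ff m N (nat \<lceil>?x\<rceil>)"
    unfolding ff_def using SS_mono[OF fc] SS_pos[OF N, of m] by (simp add: divide_right_mono)
  show ?thesis
  proof (cases "?x = of_int \<lfloor>?x\<rfloor>")
    case True
    then have "\<lceil>?x\<rceil> = \<lfloor>?x\<rfloor>" by (metis ceiling_of_int)
    then show ?thesis using True ab[OF fN] by (simp add: hN_def)
  next
    case False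
    then have c: "\<lceil>?x\<rceil> = \<lfloor>?x\<rfloor> + 1" by (simp add: ceiling_altdef)
    define w where "w = ?x - of_int \<lfloor>?x\<rfloor>"
    have w: "0 \<le> w" "w \<le> 1" unfolding w_def by linarith+
    have "hN m m N \<alpha> = w * ff m N (nat \<lceil>?x\<rceil>) + (1 - w) * ff m N (nat \<lfloor>?x\<rfloor>)"
      using False ab[OF fN] ab[OF cN] c unfolding hN_def w_def by (simp add: algebra_simps)
    moreover have "w * (ff m N (nat \<lceil>?x\<rceil>) - ff m N (nat \<lfloor>?x\<rfloor>)) \<ge> 0"
      using mono w by simp
    moreover have "(1 - w) * (ff m N (nat \<lceil>?x\<rceil>) - ff m N (nat \<lfloor>?x\<rfloor>)) \<ge> 0"
      using mono w by simp
    ultimately show ?thesis by (simp add: algebra_simps)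
  qed
qed

lemma pow_exp_ln: assumes "y > 0" shows "y ^ k = exp (real k * ln y)"
  using assms by (simp add: exp_of_nat_mult)

definition Cst :: "nat \<Rightarrow> real \<Rightarrow> real" where
  "Cst m \<alpha> = exp ((real m - 1) * (1 - ln (\<alpha> / (1 - \<alpha>)))) / (1 - \<alpha> / (1 - \<alpha>))"

lemma upper_main:
  assumes m: "m > 1" and a: "0 < \<alpha>" "\<alpha> < 1/2" and N3: "N \<ge> 3" and Nb: "real N * (1/2 - \<alpha>) \<ge> 2"
  shows "hN m m N \<alpha> \<le> Cst m \<alpha> * exp (- (real N - 1) * (real m - 1) * KL_half \<alpha>)"
proof -
  have N: "N \<ge> 1" using N3 by simp
  define r where "r = \<alpha> / (1 - \<alpha>)"
  have r: "0 < r" "r < 1" using a by (simp_all add: r_def field_simps)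
  have lnr: "ln r < 0" using r by simp
  define x where "x = real N * \<alpha>"
  define ic where "ic = nat \<lceil>x\<rceil>"
  have x0: "x > 0" using a N by (simp add: x_def)
  have ic1: "ic \<ge> 1" unfolding ic_def using x0 by linarith
  have icx: "real ic < x + 1" "x \<le> real ic" unfolding ic_def using x0 by linarith+
  define K where "K = ic - 1"
  have K: "real K < x" "K + 1 = ic" using icx ic1 by (simp_all add: K_def of_nat_diff)
  define M where "M = (N - 1) div 2"
  have M2: "real N \<le> 2 * real M + 2" "2 * real M + 2 \<le> real N + 1"
    unfolding M_def using N by linarith+
  have icM: "ic \<le> M" using icx Nb M2 unfolding x_def by (simp add: algebra_simps)
  have KM: "K \<le> M" "M + 1 < N" using icM K M2 N3 by linarith+
  have hle: "hN m m N \<alpha> \<le> ff m N ic" using hN_between[OF m N a] unfolding ic_def x_def by simp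
  have geo: "bb N (k - 1) \<le> r * bb N k" if "1 \<le> k" "k \<le> K" for k
  proof -
    have kN: "k < N" using that KM by simp
    have e: "real k * bb N k = real (N - k) * bb N (k - 1)" using choose_shift[of k N] that kN by simp
    have kx: "real k \<le> \<alpha> * real N" using that K unfolding x_def by (simp add: mult.commute)
    have "(1 - \<alpha>) * (real (N - k) * bb N (k - 1)) = (1 - \<alpha>) * real k * bb N k" using e by simp
    also have "\<dots> \<le> \<alpha> * real (N - k) * bb N k"
      using kx kN by (intro mult_right_mono) (auto simp: of_nat_diff algebra_simps)
    also have "\<alpha> * real (N - k) * bb N k = (1 - \<alpha>) * real (N - k) * (r * bb N k)"
    proof -
      have "(1 - \<alpha>) * r = \<alpha>" using a by (simp add: r_def)
      then show ?thesis by (metis mult.assoc mult.commute)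
    qed
    finally have "(1 - \<alpha>) * real (N - k) * bb N (k - 1) \<le> (1 - \<alpha>) * real (N - k) * (r * bb N k)"
      by (simp add: mult.assoc)
    moreover have "(1 - \<alpha>) * real (N - k) > 0" using a kN by simp
    ultimately show ?thesis by (meson mult_le_cancel_left_pos)
  qed
  have SSK: "SS m N ic \<le> bb N K ^ (m - 1) / (1 - r)"
    using SS_geom[OF m less_imp_le[OF r(1)] r(2), of K N] geo K by simp
  have SSN: "SS m N N \<ge> bb N M ^ (m - 1)"
  proof -
    have "SS m N (Suc M) = SS m N M + bb N M ^ (m - 1)" by (simp add: SS_Suc)
    moreover have "SS m N (Suc M) \<le> SS m N N" using KM by (intro SS_mono) simp
    ultimately show ?thesis using SS_nonneg[of m N M] by linarith
  qed
  have bKp: "bb N K > 0" "bb N M > 0" using KM by simp_all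
  define R where "R = bb N K / bb N M"
  have R0: "R > 0" using bKp by (simp add: R_def)
  have ffic: "ff m N ic \<le> R ^ (m - 1) / (1 - r)"
  proof -
    have "ff m N ic \<le> (bb N K ^ (m - 1) / (1 - r)) / bb N M ^ (m - 1)"
      unfolding ff_def using SSK SSN SS_nonneg[of m N ic] bKp r
      by (intro frac_le) auto
    also have "\<dots> = R ^ (m - 1) / (1 - r)" by (simp add: R_def power_divide)
    finally show ?thesis .
  qed
  have lnR: "ln R \<le> 1 - real N * KL_half \<alpha> - ln r"
  proof -
    have "ln R = ln (bb N K) - ln (bb N M)" using bKp by (simp add: R_def ln_div)
    also have "\<dots> \<le> FF N (real M + 1) - FF N (real K + 1)" by (rule tele_up[OF KM])
    also have "\<dots> = real N * KL_half ((real M + 1) / real N) - real N * KL_half (real ic / real N)"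
    proof -
      have "real K + 1 = real ic" using K(2) by linarith
      moreover have "0 < real M + 1" "real M + 1 < real N" using KM by linarith+
      moreover have "0 < real ic" "real ic < real N" using ic1 KM icM by linarith+
      ultimately show ?thesis by (simp add: FF_KL)
    qed
    also have "\<dots> \<le> 1 - real N * KL_half \<alpha> - ln r"
    proof -
      have q: "0 < (real M + 1) / real N" "(real M + 1) / real N < 1" using KM by (simp_all add: field_simps)
      have "real N * KL_half ((real M + 1) / real N) \<le> real N * (2 * ((real M + 1) / real N) - 1)^2"
        using KL_half_le[OF q] by (simp add: mult_left_mono)
      also have "\<dots> = (2 * real M + 2 - real N)^2 / real N" using N by (simp add: field_simps power2_eq_square)
      also have "\<dots> \<le> 1"
      proof -
        have "(2 * real M + 2 - real N)^2 \<le> 1" using M2 by (simp add: abs_le_square_iff[symmetric] power2_eq_square) (smt (verit) mult_le_one)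
        then show ?thesis using N by (simp add: divide_le_eq)
      qed
      finally have A: "real N * KL_half ((real M + 1) / real N) \<le> 1" .
      have p: "0 < real ic / real N" "real ic / real N < 1" using ic1 KM icM by (simp_all add: field_simps)
      have "KL_half (real ic / real N) \<ge> KL_half \<alpha> + ln r * (real ic / real N - \<alpha>)"
        using KL_convex[OF p, of \<alpha>] a unfolding r_def by simp
      then have "real N * KL_half (real ic / real N) \<ge> real N * KL_half \<alpha> + ln r * (real ic - x)"
        using N by (simp add: x_def field_simps mult_left_mono)
      moreover have "ln r * (real ic - x) \<ge> ln r"
        using lnr icx by (smt (verit) mult_le_cancel_left1)
      ultimately show ?thesis using A by linarith
    qed
    finally show ?thesis .
  qed
  have DN: "real N * KL_half \<alpha> \<ge> (real N - 1) * KL_half \<alpha>" using KL_nonneg[of \<alpha>] a by (simp add: algebra_simps)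
  have "R ^ (m - 1) = exp (real (m - 1) * ln R)" by (rule pow_exp_ln[OF R0])
  also have "\<dots> \<le> exp ((real m - 1) * (1 - ln r) + (- (real N - 1) * (real m - 1) * KL_half \<alpha>))"
  proof -
    have "real (m - 1) * ln R \<le> (real m - 1) * (1 - real N * KL_half \<alpha> - ln r)"
      using lnR m by (simp add: of_nat_diff mult_left_mono)
    also have "\<dots> \<le> (real m - 1) * (1 - ln r) + (- (real N - 1) * (real m - 1) * KL_half \<alpha>)"
    proof -
      have "KL_half \<alpha> * 1 \<le> KL_half \<alpha> * real m" using m KL_nonneg[of \<alpha>] a by (intro mult_left_mono) auto
      then show ?thesis by (simp add: algebra_simps)
    qed
    finally show ?thesis by simp
  qed
  also have "\<dots> = exp ((real m - 1) * (1 - ln r)) * exp (- (real N - 1) * (real m - 1) * KL_half \<alpha>)"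
    by (simp add: exp_add)
  finally have "R ^ (m - 1) / (1 - r) \<le> exp ((real m - 1) * (1 - ln r)) * exp (- (real N - 1) * (real m - 1) * KL_half \<alpha>) / (1 - r)"
    using r by (intro divide_right_mono) auto
  also have "\<dots> = Cst m \<alpha> * exp (- (real N - 1) * (real m - 1) * KL_half \<alpha>)"
    unfolding Cst_def r_def by simp
  finally have "R ^ (m - 1) / (1 - r) \<le> Cst m \<alpha> * exp (- (real N - 1) * (real m - 1) * KL_half \<alpha>)" .
  then show ?thesis using hle ffic by linarith
qed

lemma lower_main:
  assumes m: "m > 1" and a: "0 < \<alpha>" "\<alpha> < 1/2" and N3: "N \<ge> 3" and Nb: "real N * (1/2 - \<alpha>) \<ge> 2"
    and Na: "real N * \<alpha> \<ge> 2"
  shows "hN m m N \<alpha> \<ge> exp (- (real m - 1) * real N * KL_half (real (nat \<lfloor>real N * \<alpha>\<rfloor> - 1) / real N)) / real N"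
proof -
  have N: "N \<ge> 1" using N3 by simp
  define x where "x = real N * \<alpha>"
  define iF where "iF = nat \<lfloor>x\<rfloor>"
  have iF2: "iF \<ge> 2" using Na unfolding iF_def x_def by linarith
  have iFx: "real iF \<le> x" using Na unfolding iF_def x_def by linarith
  define K where "K = iF - 1"
  have K: "K \<ge> 1" "K + 1 = iF" "real K < x" using iF2 iFx by (simp_all add: K_def of_nat_diff)
  define M where "M = (N - 1) div 2"
  have M2: "real N \<le> 2 * real M + 2" "2 * real M + 2 \<le> real N + 1"
    unfolding M_def using N by linarith+
  have KM: "K \<le> M" "M < N" "M \<ge> 1" using K M2 Nb N3 unfolding x_def by (simp_all add: algebra_simps)
  have hge: "ff m N iF \<le> hN m m N \<alpha>" using hN_between[OF m N a] unfolding iF_def x_def by simp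
  have bKp: "bb N K > 0" "bb N M > 0" using KM by simp_all
  have SSi: "SS m N iF \<ge> bb N K ^ (m - 1)"
    using SS_nonneg[of m N K] K(2) by (simp add: SS_Suc[of m N K, simplified] flip: K(2))
  have SSN: "SS m N N \<le> real N * bb N M ^ (m - 1)"
  proof -
    have "SS m N N \<le> (\<Sum>k<N. bb N M ^ (m - 1))"
      unfolding SS_def M_def
      by (intro sum_mono power_mono) (auto simp: binomial_maximum)
    then show ?thesis by simp
  qed
  define R where "R = bb N K / bb N M"
  have R0: "R > 0" using bKp by (simp add: R_def)
  have SSNp: "SS m N N > 0" using SS_pos[OF N] .
  have "R ^ (m - 1) / real N = bb N K ^ (m - 1) / (real N * bb N M ^ (m - 1))"
    by (simp add: R_def power_divide)
  also have "\<dots> \<le> SS m N iF / SS m N N"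
    using SSi SSN SSNp bKp N SS_nonneg[of m N iF] by (intro frac_le) auto
  finally have A: "R ^ (m - 1) / real N \<le> hN m m N \<alpha>" using hge by (simp add: ff_def)
  have lnR: "ln R \<ge> - real N * KL_half (real K / real N)"
  proof -
    have "ln R = ln (bb N K) - ln (bb N M)" using bKp by (simp add: R_def ln_div)
    moreover have "FF N (real M) - FF N (real K) \<le> ln (bb N K) - ln (bb N M)" by (rule tele_down[OF K(1) KM(1,2)])
    moreover have "FF N (real M) - FF N (real K) = real N * KL_half (real M / real N) - real N * KL_half (real K / real N)"
      using KM K by (simp add: FF_KL)
    moreover have "KL_half (real M / real N) \<ge> 0" using KM by (intro KL_nonneg) (simp_all add: field_simps)
    moreover have "real N * KL_half (real M / real N) \<ge> 0" using calculation(4) by simp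
    ultimately show ?thesis by linarith
  qed
  have "R ^ (m - 1) = exp (real (m - 1) * ln R)" by (rule pow_exp_ln[OF R0])
  also have "\<dots> \<ge> exp (- (real m - 1) * real N * KL_half (real K / real N))"
  proof -
    have "(real m - 1) * (- real N * KL_half (real K / real N)) \<le> (real m - 1) * ln R"
      using lnR m by (intro mult_left_mono) auto
    then show ?thesis using m by (simp add: of_nat_diff algebra_simps)
  qed
  finally have "exp (- (real m - 1) * real N * KL_half (real K / real N)) / real N \<le> R ^ (m - 1) / real N"
    by (simp add: divide_right_mono)
  then show ?thesis using A unfolding K_def iF_def x_def by simp
qed

lemma hN_le1: assumes m: "m > 1" and N: "N \<ge> 1" and a: "0 < \<alpha>" "\<alpha> < 1/2"
  shows "hN m m N \<alpha> \<le> 1"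
  using hN_between[OF m N a] ff_le1[OF m N] by (meson order_trans)

lemma Cst_pos: assumes "0 < \<alpha>" "\<alpha> < 1/2" shows "Cst m \<alpha> > 0"
proof -
  have "\<alpha> / (1 - \<alpha>) < 1" using assms by (simp add: field_simps)
  then show ?thesis by (simp add: Cst_def)
qed

definition N0 :: "real \<Rightarrow> nat" where
  "N0 \<alpha> = nat \<lceil>4 / (1/2 - \<alpha>)\<rceil> + nat \<lceil>2 / \<alpha>\<rceil> + 3"

lemma N0_props: assumes a: "0 < \<alpha>" "\<alpha> < 1/2" and N: "N \<ge> N0 \<alpha>"
  shows "N \<ge> 3" "real N * (1/2 - \<alpha>) \<ge> 2" "real N * \<alpha> \<ge> 2"
proof -
  show "N \<ge> 3" using N by (simp add: N0_def)
  have "real N \<ge> 4 / (1/2 - \<alpha>)" using N unfolding N0_def by linarith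
  then have "real N * (1/2 - \<alpha>) \<ge> 4" using a by (simp add: field_simps)
  then show "real N * (1/2 - \<alpha>) \<ge> 2" by simp
  have "real N \<ge> 2 / \<alpha>" using N unfolding N0_def by linarith
  then show "real N * \<alpha> \<ge> 2" using a by (simp add: field_simps)
qed

lemma part2: assumes m: "m > 1" and a: "0 < \<alpha>" "\<alpha> < 1/2"
  shows "\<exists>c>0. \<forall>N::nat. N \<ge> 1 \<longrightarrow> hN m m N \<alpha> \<le> c * exp (- (real N - 1) * (real m - 1) * KL_half \<alpha>)"
proof -
  define D where "D = KL_half \<alpha>"
  have D0: "D \<ge> 0" using KL_nonneg[of \<alpha>] a by (simp add: D_def)
  define c where "c = max (Cst m \<alpha>) (exp (real (N0 \<alpha>) * (real m - 1) * D))"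
  have c0: "c > 0" using Cst_pos[OF a, of m] by (simp add: c_def less_max_iff_disj)
  show ?thesis
  proof (intro exI[of _ c] conjI allI impI c0)
    fix N :: nat assume N: "N \<ge> 1"
    show "hN m m N \<alpha> \<le> c * exp (- (real N - 1) * (real m - 1) * KL_half \<alpha>)"
    proof (cases "N \<ge> N0 \<alpha>")
      case True
      note P = N0_props[OF a True]
      have "hN m m N \<alpha> \<le> Cst m \<alpha> * exp (- (real N - 1) * (real m - 1) * KL_half \<alpha>)"
        by (rule upper_main[OF m a P(1,2)])
      also have "\<dots> \<le> c * exp (- (real N - 1) * (real m - 1) * KL_half \<alpha>)"
        by (intro mult_right_mono) (auto simp: c_def)
      finally show ?thesis .
    next
      case False
      have "exp (real (N0 \<alpha>) * (real m - 1) * D) * exp (- (real N - 1) * (real m - 1) * D)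
          = exp ((real (N0 \<alpha>) - real N + 1) * ((real m - 1) * D))"
        by (simp add: exp_add[symmetric] algebra_simps)
      also have "\<dots> \<ge> 1"
        using False m D0 by (intro one_le_exp_iff[THEN iffD2] mult_nonneg_nonneg) auto
      finally have "1 \<le> exp (real (N0 \<alpha>) * (real m - 1) * D) * exp (- (real N - 1) * (real m - 1) * D)" .
      also have "\<dots> \<le> c * exp (- (real N - 1) * (real m - 1) * D)"
        by (intro mult_right_mono) (auto simp: c_def)
      finally show ?thesis using hN_le1[OF m N a] by (simp add: D_def)
    qed
  qed
qed

lemma part3: assumes m: "m > 1" and a: "0 < \<alpha>" "\<alpha> < 1/2"
  shows "((\<lambda>N::nat. ln (hN m m N \<alpha>) / real N) \<longlongrightarrow> - (real m - 1) * KL_half \<alpha>) at_top"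
proof -
  define D where "D = KL_half \<alpha>"
  define q where "q N = real (nat \<lfloor>real N * \<alpha>\<rfloor> - 1) / real N" for N :: nat
  define L where "L N = - (real m - 1) * KL_half (q N) - ln (real N) / real N" for N :: nat
  define U where "U N = (ln (Cst m \<alpha>) + (real m - 1) * D) / real N - (real m - 1) * D" for N :: nat
  have ev: "eventually (\<lambda>N. N \<ge> N0 \<alpha>) at_top" by (rule eventually_ge_at_top)
  have qb: "\<alpha> - 2 / real N \<le> q N \<and> q N \<le> \<alpha>" if "N \<ge> N0 \<alpha>" for N
  proof -
    note P = N0_props[OF a that]
    have Np: "real N > 0" using P by simp
    have f1: "real (nat \<lfloor>real N * \<alpha>\<rfloor> - 1) = of_int \<lfloor>real N * \<alpha>\<rfloor> - 1"
      using P(3) by (simp add: of_nat_diff) linarith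
    have "real N * \<alpha> - 2 \<le> real (nat \<lfloor>real N * \<alpha>\<rfloor> - 1)" "real (nat \<lfloor>real N * \<alpha>\<rfloor> - 1) \<le> real N * \<alpha>"
      unfolding f1 by linarith+
    moreover have "\<alpha> - 2 / real N = (real N * \<alpha> - 2) / real N" "\<alpha> = (real N * \<alpha>) / real N"
      using Np by (simp_all add: field_simps)
    ultimately show ?thesis unfolding q_def using Np
      by (metis divide_right_mono less_imp_le)
  qed
  have qlim: "q \<longlonglongrightarrow> \<alpha>"
  proof (rule tendsto_sandwich[of "\<lambda>N. \<alpha> - 2 / real N" _ _ "\<lambda>N. \<alpha>"])
    show "\<forall>\<^sub>F N in sequentially. \<alpha> - 2 / real N \<le> q N" by (rule eventually_mono[OF ev]) (use qb in auto)
    show "\<forall>\<^sub>F N in sequentially. q N \<le> \<alpha>" by (rule eventually_mono[OF ev]) (use qb in auto)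
    show "(\<lambda>N. \<alpha> - 2 / real N) \<longlonglongrightarrow> \<alpha>" using tendsto_diff[OF tendsto_const lim_const_over_n[of 2]] by simp
  qed simp
  have Llim: "L \<longlonglongrightarrow> - (real m - 1) * D"
  proof -
    have "(\<lambda>N. KL_half (q N)) \<longlonglongrightarrow> KL_half \<alpha>"
      unfolding KL_half_def bin_entropy_def using a by (intro tendsto_intros qlim) auto
    then show ?thesis unfolding L_def D_def
      using tendsto_diff[OF tendsto_mult[OF tendsto_const] lim_ln_over_n] by simp
  qed
  have Ulim: "U \<longlonglongrightarrow> - (real m - 1) * D"
  proof -
    have "U \<longlonglongrightarrow> 0 - (real m - 1) * D" unfolding U_def by (intro tendsto_intros)
    moreover have "0 - (real m - 1) * D = - (real m - 1) * D" by (simp add: algebra_simps)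
    ultimately show ?thesis by metis
  qed
  have bnds: "L N \<le> ln (hN m m N \<alpha>) / real N \<and> ln (hN m m N \<alpha>) / real N \<le> U N" if "N \<ge> N0 \<alpha>" for N
  proof -
    note P = N0_props[OF a that]
    have Np: "real N > 0" using P by simp
    have lo: "exp (- (real m - 1) * real N * KL_half (q N)) / real N \<le> hN m m N \<alpha>"
      using lower_main[OF m a P] unfolding q_def by simp
    have lo0: "exp (- (real m - 1) * real N * KL_half (q N)) / real N > 0" using Np by simp
    have hp: "hN m m N \<alpha> > 0" using lo lo0 by linarith
    have up: "hN m m N \<alpha> \<le> Cst m \<alpha> * exp (- (real N - 1) * (real m - 1) * D)"
      using upper_main[OF m a P(1,2)] by (simp add: D_def)
    have "ln (exp (- (real m - 1) * real N * KL_half (q N)) / real N) \<le> ln (hN m m N \<alpha>)"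
      using lo lo0 by simp
    then have "- (real m - 1) * real N * KL_half (q N) - ln (real N) \<le> ln (hN m m N \<alpha>)"
      using Np by (simp add: ln_div)
    then have "L N * real N \<le> ln (hN m m N \<alpha>)" unfolding L_def using Np by (simp add: algebra_simps)
    then have A: "L N \<le> ln (hN m m N \<alpha>) / real N" using Np by (simp add: field_simps)
    have "ln (hN m m N \<alpha>) \<le> ln (Cst m \<alpha> * exp (- (real N - 1) * (real m - 1) * D))"
      using up hp by simp
    also have "\<dots> = ln (Cst m \<alpha>) - (real N - 1) * (real m - 1) * D"
      using Cst_pos[OF a, of m] by (simp add: ln_mult algebra_simps)
    also have "\<dots> = U N * real N" unfolding U_def using Np by (simp add: field_simps)
    finally have B: "ln (hN m m N \<alpha>) / real N \<le> U N" using Np by (simp add: field_simps)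
    show ?thesis using A B by simp
  qed
  show ?thesis unfolding D_def[symmetric]
  proof (rule tendsto_sandwich[OF _ _ Llim Ulim])
    show "\<forall>\<^sub>F N in sequentially. L N \<le> ln (hN m m N \<alpha>) / real N" by (rule eventually_mono[OF ev]) (use bnds in auto)
    show "\<forall>\<^sub>F N in sequentially. ln (hN m m N \<alpha>) / real N \<le> U N" by (rule eventually_mono[OF ev]) (use bnds in auto)
  qed
qed

theorem theorem1:
  fixes m :: nat
  assumes "m > 1"
  shows "(\<forall>N::nat. N \<ge> 1 \<longrightarrow> (\<forall>i\<le>N.
            absorb_prob m m N i =
              (\<Sum>k<i. real ((N - 1) choose k) ^ (m - 1)) /
              (\<Sum>k<N. real ((N - 1) choose k) ^ (m - 1))))
       \<and> (\<forall>\<alpha>::real. 0 < \<alpha> \<and> \<alpha> < 1/2 \<longrightarrow>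
            (\<exists>c>0. \<forall>N::nat. N \<ge> 1 \<longrightarrow>
               hN m m N \<alpha> \<le> c * exp (- (real N - 1) * (real m - 1) * KL_half \<alpha>)))
       \<and> (\<forall>\<alpha>::real. 0 < \<alpha> \<and> \<alpha> < 1/2 \<longrightarrow>
            ((\<lambda>N::nat. ln (hN m m N \<alpha>) / real N) \<longlongrightarrow> - (real m - 1) * KL_half \<alpha>) at_top)"
  using part1[OF assms] part2[OF assms] part3[OF assms] by (auto simp: SS_def)

end
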